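(* Assume (A1)–(A2) below and let $C_1,C_2,C_3\ge0$ be constants depending only on the bounds in (A1)–(A2). Let $\varepsilon,\hat\varepsilon\in[0,\bar\varepsilon]$, $\gamma,\hat\gamma\in[\underline\gamma,\bar\gamma]$, and let $\hat w:[0,T]\times(0,\ell)\to[-\bar w,\bar w]$ with $\partial_\tau\hat w,\partial_x\hat w\in L^\infty(0,T;L^2(0,\ell))$. Define $\hat e_1=0$, $\hat e_2=(\varepsilon^2-\hat\varepsilon^2)(\partial_\tau\hat w+\tfrac12\partial_x|\hat w|^2)+(\gamma-\hat\gamma)|\hat w|\hat w$ and $\mathcal{P}(\hat{\boldsymbol e})=C_1\|\hat e_1\|_{L^2}^2+C_2\|\hat e_2\|_{L^2}^2+C_3\|\hat e_2\|_{L^{3/2}}^{3/2}$ (norms on $(0,\ell)$ at a fixed time). Then for all times $$\mathcal{P}(\hat{\boldsymbol e})\le\hat C_3'|\varepsilon^2-\hat\varepsilon^2|^{3/2}+\hat C_3''|\gamma-\hat\gamma|^{3/2},$$ with constants $\hat C_3',\hat C_3''$ depending only on the bounds in (A1)–(A2) and on $\|\partial_\tau\hat w\|_{L^\infty(0,T;L^2)}$ and $\|\partial_x\hat w\|_{L^\infty(0,T;L^2)}$.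
   Context: (A1): positive constants $\underline\rho\le\bar\rho$, $\bar w$, $\bar\varepsilon$, a smooth strictly convex $P$ with $\rho P''(\rho)\ge4\bar\varepsilon^2\bar w^2$ for $\underline\rho\le\rho\le\bar\rho$; the cross section satisfies $0<\underline a\le a\le\bar a$ on $(0,\ell)$; $|gz|\le\bar g\bar z$. (A2): $0\le\varepsilon,\hat\varepsilon\le\bar\varepsilon$, $0<\underline\gamma\le\gamma,\hat\gamma\le\bar\gamma$, and velocities are bounded by $\bar w$ in absolute value. Here $\hat{\boldsymbol e}=(\hat e_1,\hat e_2)$ is the residual obtained when a solution with parameters $(\hat\varepsilon,\hat\gamma)$ of the rescaled gas equations is inserted into the equations with parameters $(\varepsilon,\gamma)$. *)

theory Defs
  imports "HOL-Analysis.Analysis"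
begin

definition test_fun :: "real \<Rightarrow> real \<Rightarrow> (real \<times> real \<Rightarrow> real)
    \<Rightarrow> (real \<times> real \<Rightarrow> real \<times> real \<Rightarrow> real) \<Rightarrow> bool" where
  "test_fun T l phi D \<longleftrightarrow>
     (\<exists>K. compact K \<and> K \<subseteq> box (0,0) (T,l) \<and> (\<forall>p. p \<notin> K \<longrightarrow> phi p = 0)) \<and>
     (\<forall>p. (phi has_derivative D p) (at p)) \<and>
     continuous_on UNIV (\<lambda>p. D p (1,0)) \<and> continuous_on UNIV (\<lambda>p. D p (0,1))"

text \<open>v is the weak partial derivative of w in direction dir ((1,0): time, (0,1): space)
  on (0,T)x(0,l).\<close>
definition weak_pderiv :: "real \<Rightarrow> real \<Rightarrow> (real \<Rightarrow> real \<Rightarrow> real) \<Rightarrow> real \<times> real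
    \<Rightarrow> (real \<Rightarrow> real \<Rightarrow> real) \<Rightarrow> bool" where
  "weak_pderiv T l w dir v \<longleftrightarrow>
     (\<forall>phi D. test_fun T l phi D \<longrightarrow>
        set_integrable lborel (box (0,0) (T,l)) (\<lambda>p. v (fst p) (snd p) * phi p) \<and>
        (LINT p:box (0,0) (T,l)|lborel. w (fst p) (snd p) * D p dir)
          = - (LINT p:box (0,0) (T,l)|lborel. v (fst p) (snd p) * phi p))"

definition L2sq :: "real \<Rightarrow> (real \<Rightarrow> real) \<Rightarrow> real" where
  "L2sq l f = (LINT x:{0<..<l}|lborel. (f x)^2)"

definition L32p :: "real \<Rightarrow> (real \<Rightarrow> real) \<Rightarrow> real" where
  "L32p l f = (LINT x:{0<..<l}|lborel. \<bar>f x\<bar> powr (3/2))"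

definition Pfun :: "real \<Rightarrow> real \<Rightarrow> real \<Rightarrow> real \<Rightarrow> (real \<Rightarrow> real) \<Rightarrow> (real \<Rightarrow> real) \<Rightarrow> real" where
  "Pfun l C1 C2 C3 e1 e2 = C1 * L2sq l e1 + C2 * L2sq l e2 + C3 * L32p l e2"

end

theory Submission
  imports Defs
begin

lemma set_mono':
  fixes f g :: "real \<Rightarrow> real"
  assumes "set_integrable lborel A g" "\<And>x. x\<in>A \<Longrightarrow> f x \<le> g x" "\<And>x. x\<in>A \<Longrightarrow> 0 \<le> g x"
  shows "(LINT x:A|lborel. f x) \<le> (LINT x:A|lborel. g x)"
  unfolding set_lebesgue_integral_def
  using integral_mono'[of lborel "\<lambda>x. indicator A x *\<^sub>R g x" "\<lambda>x. indicator A x *\<^sub>R f x"] assms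
  by (auto simp: set_integrable_def indicator_def)

lemma sq2: fixes x y :: real shows "(x+y)^2 \<le> 2*x^2 + 2*y^2"
proof -
  have "0 \<le> (x-y)^2" by simp
  thus ?thesis by (simp add: power2_eq_square algebra_simps)
qed

lemma pt2:
  fixes a b p q w W :: real
  assumes "\<bar>w\<bar> \<le> W"
  shows "(a*(p + w*q) + b*\<bar>w\<bar>*w)^2 \<le> 4*a^2*p^2 + 4*a^2*W^2*q^2 + 2*b^2*W^4"
proof -
  have W0: "W \<ge> 0" using assms by linarith
  have w2: "w^2 \<le> W^2" using assms W0 abs_le_square_iff[of w W] by simp
  have h0: "(a*(p + w*q) + b*\<bar>w\<bar>*w)^2 \<le> 2*(a*(p + w*q))^2 + 2*(b*\<bar>w\<bar>*w)^2"
    by (rule sq2)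
  have e1: "(a*(p + w*q))^2 = a^2*(p+w*q)^2" by (simp add: power_mult_distrib)
  have e2: "(b*\<bar>w\<bar>*w)^2 = b^2*(w^2)^2" by (simp add: power_mult_distrib power2_abs power2_eq_square)
  have h1: "(p+w*q)^2 \<le> 2*p^2 + 2*(w^2*q^2)"
    using sq2[of p "w*q"] by (simp add: power_mult_distrib)
  have h2: "w^2*q^2 \<le> W^2*q^2" using w2 by (simp add: mult_right_mono)
  have h3: "(p+w*q)^2 \<le> 2*p^2 + 2*(W^2*q^2)" using h1 h2 by linarith
  have h4: "a^2*(p+w*q)^2 \<le> a^2*(2*p^2 + 2*(W^2*q^2))" using h3 by (simp add: mult_left_mono)
  have h5: "(w^2)^2 \<le> (W^2)^2" by (rule power_mono[OF w2]) simp
  have h6: "b^2*(w^2)^2 \<le> b^2*(W^2)^2" using h5 by (simp add: mult_left_mono)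
  have h7: "(a*(p + w*q) + b*\<bar>w\<bar>*w)^2 \<le> 2*(a^2*(2*p^2 + 2*(W^2*q^2))) + 2*(b^2*(W^2)^2)"
    using h0 h4 h6 unfolding e1 e2 by linarith
  have e3: "2*(a^2*(2*p^2 + 2*(W^2*q^2))) + 2*(b^2*(W^2)^2) = 4*a^2*p^2 + 4*a^2*W^2*q^2 + 2*b^2*W^4"
    by (simp add: algebra_simps power_mult_distrib flip: power_mult)
  show ?thesis using h7 unfolding e3 .
qed

lemma pt32:
  fixes a b X Y V :: real
  assumes "\<bar>Y\<bar> \<le> V"
  shows "\<bar>a*X + b*Y\<bar> powr (3/2) \<le> 2 powr (3/2) * (\<bar>a\<bar> powr (3/2) * (1 + X^2) + \<bar>b\<bar> powr (3/2) * V powr (3/2))"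
proof -
  define u where "u = \<bar>a\<bar>*\<bar>X\<bar>"
  define v where "v = \<bar>b\<bar>*\<bar>Y\<bar>"
  have u0: "u \<ge> 0" and v0: "v \<ge> 0" by (auto simp: u_def v_def)
  have s0: "\<bar>a*X + b*Y\<bar> \<le> u + v" unfolding u_def v_def
    by (metis abs_mult abs_triangle_ineq)
  have s1: "\<bar>a*X + b*Y\<bar> powr (3/2) \<le> (u+v) powr (3/2)" using s0 by (intro powr_mono2) auto
  have s2: "(u+v) powr (3/2) \<le> (2*max u v) powr (3/2)" using u0 v0 by (intro powr_mono2) auto
  have s3: "(2*max u v) powr (3/2) = 2 powr (3/2) * max u v powr (3/2)" using u0 v0 by (simp add: powr_mult)
  have s4: "max u v powr (3/2) \<le> u powr (3/2) + v powr (3/2)"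
    by (cases "u \<le> v") (auto simp: max_def)
  have XX: "\<bar>X\<bar> powr (3/2) \<le> 1 + X^2"
  proof (cases "\<bar>X\<bar> \<le> 1")
    case True
    then have "\<bar>X\<bar> powr (3/2) \<le> 1" by (intro powr_le1) auto
    moreover have "0 \<le> X^2" by simp
    ultimately show ?thesis by linarith
  next
    case False
    then have "\<bar>X\<bar> powr (3/2) \<le> \<bar>X\<bar> powr 2" by (intro powr_mono) auto
    also have "\<bar>X\<bar> powr 2 = X^2" using False by (simp add: powr_realpow)
    finally show ?thesis by simp
  qed
  have s5: "u powr (3/2) \<le> \<bar>a\<bar> powr (3/2) * (1 + X^2)"
    unfolding u_def using XX by (simp add: powr_mult mult_left_mono)
  have s6: "v powr (3/2) \<le> \<bar>b\<bar> powr (3/2) * V powr (3/2)"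
    unfolding v_def using assms by (simp add: powr_mult mult_left_mono powr_mono2)
  have s7: "u powr (3/2) + v powr (3/2) \<le> \<bar>a\<bar> powr (3/2) * (1 + X^2) + \<bar>b\<bar> powr (3/2) * V powr (3/2)"
    using s5 s6 by linarith
  have K0: "(0::real) \<le> 2 powr (3/2)" by simp
  have s8: "2 powr (3/2) * max u v powr (3/2) \<le> 2 powr (3/2) * (\<bar>a\<bar> powr (3/2) * (1 + X^2) + \<bar>b\<bar> powr (3/2) * V powr (3/2))"
    using s4 s7 K0 by (intro mult_left_mono) auto
  show ?thesis using s1 s2 s3 s8 by linarith
qed

lemma sq_le_powr:
  fixes x B :: real
  assumes "\<bar>x\<bar> \<le> B"
  shows "x^2 \<le> \<bar>x\<bar> powr (3/2) * B powr (1/2)"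
proof (cases "x = 0")
  case True then show ?thesis by simp
next
  case False
  have "x^2 = \<bar>x\<bar> powr 2" using False by (simp add: powr_realpow)
  also have "\<dots> = \<bar>x\<bar> powr (3/2) * \<bar>x\<bar> powr (1/2)" by (simp add: powr_add[symmetric])
  also have "\<dots> \<le> \<bar>x\<bar> powr (3/2) * B powr (1/2)" using assms by (intro mult_left_mono powr_mono2) auto
  finally show ?thesis .
qed

lemma sic:
  fixes c l :: real assumes "l > 0"
  shows "set_integrable lborel {0<..<l} (\<lambda>x. c)" "(LINT x:{0<..<l}|lborel. c) = l * c"
proof -
  show "set_integrable lborel {0<..<l} (\<lambda>x. c)"
    unfolding set_integrable_def
    using assms by (intro integrable_scaleR_left integrable_real_indicator) auto
  show "(LINT x:{0<..<l}|lborel. c) = l * c"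
    using assms by (subst set_integral_const) auto
qed

lemma alg1: "(e::real) \<le> K * (A * (1 + (2*p^2 + 2*W^2*q^2)) + B * V) \<Longrightarrow> e \<le> K*A + (2*K*A) * p^2 + (2*K*A*W^2) * q^2 + K*B*V"
  by (simp add: algebra_simps)
lemma alg2: "(e::real) \<le> l*(K*A) + (2*K*A) * Mt^2 + (2*K*A*W^2) * Mx^2 + l*(K*B*V) \<Longrightarrow> e \<le> K*(l+2*Mt^2+2*W^2*Mx^2) * A + K*V*l * B"
  by (simp add: algebra_simps)
lemma alg3: "(e::real) \<le>  4*(A * S) * Mt^2 + (4*(A * S)*W^2) * Mx^2 + l*(2*(B*R)*W^4) \<Longrightarrow> e \<le> (4*Mt^2+4*W^2*Mx^2)*S * A + 2*W^4*l*R * B"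
  by (simp add: algebra_simps)
lemma alg4: "(e::real) \<le> C2 * ((4*Mt^2+4*W^2*Mx^2)*S * A + 2*W^4*l*R * B)
     + C3 * (K*(l+2*Mt^2+2*W^2*Mx^2) * A + K*V*l * B) \<Longrightarrow> e \<le> (C2*(4*Mt^2+4*W^2*Mx^2)*S + C3*K*(l+2*Mt^2+2*W^2*Mx^2)) * A
     + (C2*2*W^4*l*R + C3*K*V*l) * B"
  by (simp add: algebra_simps)

lemma key:
  fixes l W Mt Mx a b EA G C1 C2 C3 :: real and w p q :: "real \<Rightarrow> real"
  assumes l: "l > 0" and W: "W \<ge> 0" and wb: "\<forall>x\<in>{0<..<l}. \<bar>w x\<bar> \<le> W"
    and ip: "set_integrable lborel {0<..<l} (\<lambda>x. (p x)^2)" and Lp: "L2sq l p \<le> Mt^2"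
    and iq: "set_integrable lborel {0<..<l} (\<lambda>x. (q x)^2)" and Lq: "L2sq l q \<le> Mx^2"
    and a: "\<bar>a\<bar> \<le> EA" and b: "\<bar>b\<bar> \<le> G" and C2: "C2 \<ge> 0" and C3: "C3 \<ge> 0"
  shows "Pfun l C1 C2 C3 (\<lambda>x. 0) (\<lambda>x. a*(p x + w x * q x) + b*\<bar>w x\<bar>*w x)
    \<le> (C2*(4*Mt^2+4*W^2*Mx^2)*EA powr (1/2) + C3*2 powr (3/2)*(l+2*Mt^2+2*W^2*Mx^2)) * \<bar>a\<bar> powr (3/2)
     + (C2*2*W^4*l*G powr (1/2) + C3*2 powr (3/2)*(W^2) powr (3/2)*l) * \<bar>b\<bar> powr (3/2)"
proof -
  define E where "E = (\<lambda>x. a*(p x + w x * q x) + b*\<bar>w x\<bar>*w x)"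
  define K :: real where "K = 2 powr (3/2)"
  define A where "A = \<bar>a\<bar> powr (3/2)"
  define B where "B = \<bar>b\<bar> powr (3/2)"
  have K0: "K \<ge> 0" and A0: "A \<ge> 0" and B0: "B \<ge> 0" by (auto simp: K_def A_def B_def)
  define G2 where "G2 = (\<lambda>x. 4*a^2 * (p x)^2 + (4*a^2*W^2) * (q x)^2 + 2*b^2*W^4)"
  have iG2: "set_integrable lborel {0<..<l} G2"
    unfolding G2_def using ip iq sic[OF l] by (intro set_integral_add set_integrable_mult_right) auto
  have IG2: "(LINT x:{0<..<l}|lborel. G2 x) = 4*a^2 * L2sq l p + (4*a^2*W^2) * L2sq l q + l*(2*b^2*W^4)"
    unfolding G2_def L2sq_def using ip iq sic[OF l]
    by (simp add: set_integral_add set_integrable_mult_right)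
  have "L2sq l E \<le> (LINT x:{0<..<l}|lborel. G2 x)"
    unfolding L2sq_def
  proof (rule set_mono'[OF iG2])
    fix x assume "x \<in> {0<..<l}"
    then show "(E x)^2 \<le> G2 x" unfolding E_def G2_def using pt2[of "w x" W a "p x" "q x" b] wb by auto
    show "0 \<le> G2 x" unfolding G2_def by simp
  qed
  also have "\<dots> \<le> 4*a^2 * Mt^2 + (4*a^2*W^2) * Mx^2 + l*(2*b^2*W^4)"
    unfolding IG2 using Lp Lq l by (intro add_mono mult_left_mono) auto
  also have "\<dots> \<le> 4*(A * EA powr (1/2)) * Mt^2 + (4*(A * EA powr (1/2))*W^2) * Mx^2 + l*(2*(B*G powr (1/2))*W^4)"
    using sq_le_powr[OF a] sq_le_powr[OF b] l unfolding A_def B_def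
    by (intro add_mono mult_left_mono mult_right_mono) auto
  finally have E2: "L2sq l E \<le> (4*Mt^2+4*W^2*Mx^2)*EA powr (1/2) * A + 2*W^4*l*G powr (1/2) * B"
    by (rule alg3)
  define G3 where "G3 = (\<lambda>x. K*A + (2*K*A) * (p x)^2 + (2*K*A*W^2) * (q x)^2 + K*B*(W^2) powr (3/2))"
  have iG3: "set_integrable lborel {0<..<l} G3"
    unfolding G3_def using ip iq sic[OF l] by (intro set_integral_add set_integrable_mult_right) auto
  have IG3: "(LINT x:{0<..<l}|lborel. G3 x) = l*(K*A) + (2*K*A) * L2sq l p + (2*K*A*W^2) * L2sq l q + l*(K*B*(W^2) powr (3/2))"
    unfolding G3_def L2sq_def using ip iq sic[OF l]
    by (simp add: set_integral_add set_integrable_mult_right)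
  have "L32p l E \<le> (LINT x:{0<..<l}|lborel. G3 x)"
    unfolding L32p_def
  proof (rule set_mono'[OF iG3])
    fix x assume x: "x \<in> {0<..<l}"
    have wxx: "\<bar>w x\<bar> \<le> W" using wb x by auto
    have wx: "\<bar>\<bar>w x\<bar>*w x\<bar> \<le> W^2"
      using mult_mono[OF wxx wxx] W by (simp add: abs_mult power2_eq_square)
    have X: "(p x + w x * q x)^2 \<le> 2*(p x)^2 + 2*W^2*(q x)^2"
    proof -
      have w2: "(w x)^2 \<le> W^2" using wxx W abs_le_square_iff[of "w x" W] by simp
      have h1: "(p x + w x * q x)^2 \<le> 2*(p x)^2 + 2*((w x)^2*(q x)^2)"
        using sq2[of "p x" "w x * q x"] by (simp add: power_mult_distrib)
      have h2: "(w x)^2*(q x)^2 \<le> W^2*(q x)^2" using w2 by (simp add: mult_right_mono)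
      show ?thesis using h1 h2 by linarith
    qed
    have "\<bar>E x\<bar> powr (3/2) \<le> K * (A * (1 + (p x + w x * q x)^2) + B * (W^2) powr (3/2))"
      unfolding E_def K_def A_def B_def using pt32[OF wx, of a "p x + w x * q x" b] by (simp add: mult.assoc)
    also have "\<dots> \<le> K * (A * (1 + (2*(p x)^2 + 2*W^2*(q x)^2)) + B * (W^2) powr (3/2))"
      using X K0 A0 B0 by (intro mult_left_mono add_mono) auto
    finally show "\<bar>E x\<bar> powr (3/2) \<le> G3 x" unfolding G3_def by (rule alg1)
    show "0 \<le> G3 x" unfolding G3_def using K0 A0 B0 by simp
  qed
  also have "\<dots> \<le> l*(K*A) + (2*K*A) * Mt^2 + (2*K*A*W^2) * Mx^2 + l*(K*B*(W^2) powr (3/2))"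
    unfolding IG3 using Lp Lq K0 A0 B0 l by (intro add_mono mult_left_mono) auto
  finally have E3: "L32p l E \<le> K*(l+2*Mt^2+2*W^2*Mx^2) * A + K*(W^2) powr (3/2)*l * B"
    by (rule alg2)
  have "Pfun l C1 C2 C3 (\<lambda>x. 0) E = C2 * L2sq l E + C3 * L32p l E"
    by (simp add: Pfun_def L2sq_def)
  also have "\<dots> \<le> C2 * ((4*Mt^2+4*W^2*Mx^2)*EA powr (1/2) * A + 2*W^4*l*G powr (1/2) * B)
     + C3 * (K*(l+2*Mt^2+2*W^2*Mx^2) * A + K*(W^2) powr (3/2)*l * B)"
    using E2 E3 C2 C3 by (intro add_mono mult_left_mono) auto
  finally have "Pfun l C1 C2 C3 (\<lambda>x. 0) E \<le> (C2*(4*Mt^2+4*W^2*Mx^2)*EA powr (1/2) + C3*K*(l+2*Mt^2+2*W^2*Mx^2)) * A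
     + (C2*2*W^4*l*G powr (1/2) + C3*K*(W^2) powr (3/2)*l) * B"
    by (rule alg4)
  then show ?thesis unfolding E_def K_def A_def B_def .
qed

theorem corollary4p6:
  fixes epsbar wbar glo ghi l C1 C2 C3 Mt Mx :: real
  assumes "epsbar > 0" "wbar > 0" "0 < glo" "glo \<le> ghi" "l > 0"
    and "C1 \<ge> 0" "C2 \<ge> 0" "C3 \<ge> 0" "Mt \<ge> 0" "Mx \<ge> 0"
  shows "\<exists>C' C''. C' \<ge> 0 \<and> C'' \<ge> 0 \<and>
    (\<forall>T eps epsh gam gamh (w :: real \<Rightarrow> real \<Rightarrow> real) wt wx.
       T > 0 \<and> eps \<in> {0..epsbar} \<and> epsh \<in> {0..epsbar} \<and>
       gam \<in> {glo..ghi} \<and> gamh \<in> {glo..ghi} \<and>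
       (\<forall>t\<in>{0..T}. \<forall>x\<in>{0<..<l}. \<bar>w t x\<bar> \<le> wbar) \<and>
       (\<lambda>p. w (fst p) (snd p)) \<in> borel_measurable lborel \<and>
       (\<lambda>p. wt (fst p) (snd p)) \<in> borel_measurable lborel \<and>
       (\<lambda>p. wx (fst p) (snd p)) \<in> borel_measurable lborel \<and>
       weak_pderiv T l w (1,0) wt \<and> weak_pderiv T l w (0,1) wx \<and>
       (AE t in lborel. t \<in> {0..T} \<longrightarrow>
          set_integrable lborel {0<..<l} (\<lambda>x. (wt t x)^2) \<and> L2sq l (wt t) \<le> Mt^2) \<and>
       (AE t in lborel. t \<in> {0..T} \<longrightarrow>
          set_integrable lborel {0<..<l} (\<lambda>x. (wx t x)^2) \<and> L2sq l (wx t) \<le> Mx^2)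
     \<longrightarrow>
       (AE t in lborel. t \<in> {0..T} \<longrightarrow>
          Pfun l C1 C2 C3 (\<lambda>x. 0)
            (\<lambda>x. (eps^2 - epsh^2) * (wt t x + w t x * wx t x)
                 + (gam - gamh) * \<bar>w t x\<bar> * w t x)
          \<le> C' * \<bar>eps^2 - epsh^2\<bar> powr (3/2) + C'' * \<bar>gam - gamh\<bar> powr (3/2)))"
  proof -
  have l: "l > 0" and W: "wbar \<ge> 0" and C2: "C2 \<ge> 0" and C3: "C3 \<ge> 0" using assms by auto
  show ?thesis
    apply (rule exI[of _ "C2*(4*Mt^2+4*wbar^2*Mx^2)*(epsbar^2) powr (1/2) + C3*2 powr (3/2)*(l+2*Mt^2+2*wbar^2*Mx^2)"])
    apply (rule exI[of _ "C2*2*wbar^4*l*(ghi-glo) powr (1/2) + C3*2 powr (3/2)*(wbar^2) powr (3/2)*l"])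
    apply (intro conjI allI impI)
    subgoal using assms by (intro add_nonneg_nonneg mult_nonneg_nonneg) auto
    subgoal using assms by (intro add_nonneg_nonneg mult_nonneg_nonneg) auto
    apply (elim conjE)
    subgoal premises H for T eps epsh gam gamh w wt wx
    proof -
      have eps: "eps \<in> {0..epsbar}" and epsh: "epsh \<in> {0..epsbar}"
        and gam: "gam \<in> {glo..ghi}" and gamh: "gamh \<in> {glo..ghi}"
        using H(2) H(3) H(4) H(5) by auto
      have e1: "eps^2 \<le> epsbar^2" using eps by (intro power_mono) auto
      have e2: "epsh^2 \<le> epsbar^2" using epsh by (intro power_mono) auto
      have e0: "0 \<le> eps^2" "0 \<le> epsh^2" by auto
      have a: "\<bar>eps^2 - epsh^2\<bar> \<le> epsbar^2" using e1 e2 e0 by linarith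
      have b: "\<bar>gam - gamh\<bar> \<le> ghi - glo" using gam gamh by auto
      have wb: "\<forall>t\<in>{0..T}. \<forall>x\<in>{0<..<l}. \<bar>w t x\<bar> \<le> wbar" using H(6) by simp
      have h1: "AE t in lborel. t \<in> {0..T} \<longrightarrow>
            set_integrable lborel {0<..<l} (\<lambda>x. (wt t x)^2) \<and> L2sq l (wt t) \<le> Mt^2" using H(12) by simp
      have h2: "AE t in lborel. t \<in> {0..T} \<longrightarrow>
            set_integrable lborel {0<..<l} (\<lambda>x. (wx t x)^2) \<and> L2sq l (wx t) \<le> Mx^2" using H(13) by simp
      show ?thesis
        using h1 h2
        apply eventually_elim
        apply (rule impI)
        apply (rule key[OF l W _ _ _ _ _ a b _ _])
        using wb C2 C3 apply auto
        done
    qed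
    done
qed

end
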